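(* For every $a,b,c,d>0$ such that $b<c+d$, one has $$\left(1+\mathbf{B}'_{a,b}\right)\times\left(1+\mathbf{B}'_{c,d}\right)-1\;\stackrel{d}{=}\;\mathbf{B}'_{a+c,d}\times\left(1+\mathbf{B}_{a,c}\,\mathbf{B}'_{c+d-b,b}\right),$$ where all random variables appearing on the same side of the identity are independent.
   Context: For $p,q>0$, $\mathbf{B}_{p,q}$ denotes a beta random variable with density $\frac{\Gamma(p+q)}{\Gamma(p)\Gamma(q)}x^{p-1}(1-x)^{q-1}$ on $(0,1)$, and $\mathbf{B}'_{p,q}$ a beta prime random variable with density $\frac{\Gamma(p+q)}{\Gamma(p)\Gamma(q)}\frac{x^{p-1}}{(1+x)^{p+q}}$ on $(0,\infty)$. $\stackrel{d}{=}$ denotes equality in distribution. *)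

theory Defs
  imports "HOL-Probability.Probability"
begin

definition beta_density :: "real \<Rightarrow> real \<Rightarrow> real \<Rightarrow> real" where
  "beta_density p q x =
     (if 0 < x \<and> x < 1
      then Gamma (p + q) / (Gamma p * Gamma q) * x powr (p - 1) * (1 - x) powr (q - 1)
      else 0)"

definition beta_prime_density :: "real \<Rightarrow> real \<Rightarrow> real \<Rightarrow> real" where
  "beta_prime_density p q x =
     (if 0 < x
      then Gamma (p + q) / (Gamma p * Gamma q) * x powr (p - 1) / (1 + x) powr (p + q)
      else 0)"

definition beta_measure :: "real \<Rightarrow> real \<Rightarrow> real measure" where
  "beta_measure p q = density lborel (\<lambda>x. ennreal (beta_density p q x))"

definition beta_prime_measure :: "real \<Rightarrow> real \<Rightarrow> real measure" where
  "beta_prime_measure p q = density lborel (\<lambda>x. ennreal (beta_prime_density p q x))"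

end

theory Submission
  imports Defs
begin


lemma bp_meas[measurable]: "(\<lambda>x. beta_prime_density p q x) \<in> borel_measurable borel"
  unfolding beta_prime_density_def by measurable
lemma be_meas[measurable]: "(\<lambda>x. beta_density p q x) \<in> borel_measurable borel"
  unfolding beta_density_def by measurable

lemma sf_bp: "sigma_finite_measure (beta_prime_measure p q)"
  unfolding beta_prime_measure_def
  by (subst sigma_finite_measure.sigma_finite_iff_density_finite[OF sigma_finite_lborel]) auto
lemma sf_be: "sigma_finite_measure (beta_measure p q)"
  unfolding beta_measure_def
  by (subst sigma_finite_measure.sigma_finite_iff_density_finite[OF sigma_finite_lborel]) auto

lemma sets_bp[measurable_cong, simp]: "sets (beta_prime_measure p q) = sets borel"
  unfolding beta_prime_measure_def by simp
lemma sets_be[measurable_cong, simp]: "sets (beta_measure p q) = sets borel"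
  unfolding beta_measure_def by simp

lemma pair_int:
  assumes sf: "sigma_finite_measure N"
    and f[measurable]: "f \<in> borel_measurable borel"
    and H[measurable]: "H \<in> borel_measurable (density lborel f \<Otimes>\<^sub>M N)"
  shows "(\<integral>\<^sup>+\<omega>. H \<omega> \<partial>(density lborel f \<Otimes>\<^sub>M N)) = (\<integral>\<^sup>+x. f x * (\<integral>\<^sup>+y. H (x,y) \<partial>N) \<partial>lborel)"
proof -
  interpret N: sigma_finite_measure N by (rule sf)
  have "(\<integral>\<^sup>+\<omega>. H \<omega> \<partial>(density lborel f \<Otimes>\<^sub>M N)) = (\<integral>\<^sup>+x. (\<integral>\<^sup>+y. H (x,y) \<partial>N) \<partial>density lborel f)"
    by (rule N.nn_integral_fst[symmetric]) simp
  also have "\<dots> = (\<integral>\<^sup>+x. f x * (\<integral>\<^sup>+y. H (x,y) \<partial>N) \<partial>lborel)"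
  proof (rule nn_integral_density)
    have "(\<lambda>x. \<integral>\<^sup>+y. H (x,y) \<partial>N) \<in> borel_measurable (density lborel f)"
      using H by (intro N.borel_measurable_nn_integral) (simp add: split_beta')
    then show "(\<lambda>x. \<integral>\<^sup>+y. H (x,y) \<partial>N) \<in> borel_measurable lborel"
      by (simp cong: measurable_cong_sets)
  qed simp
  finally show ?thesis .
qed



definition BC :: "real \<Rightarrow> real \<Rightarrow> real" where
  "BC p q = Gamma (p + q) / (Gamma p * Gamma q)"

lemma BC_pos: "0 < p \<Longrightarrow> 0 < q \<Longrightarrow> 0 < BC p q"
  unfolding BC_def by (simp add: Gamma_real_pos)

lemma BC_Beta: "0 < p \<Longrightarrow> 0 < q \<Longrightarrow> BC p q * Beta p q = 1"
proof -
  assume "0 < p" "0 < q"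
  then have "Gamma p \<noteq> 0" "Gamma q \<noteq> 0" "Gamma (p+q) \<noteq> 0"
    using Gamma_real_pos[of p] Gamma_real_pos[of q] Gamma_real_pos[of "p+q"] by linarith+
  then show ?thesis unfolding BC_def Beta_def by (simp add: field_simps)
qed

lemma bp_nonneg: "0 < p \<Longrightarrow> 0 < q \<Longrightarrow> 0 \<le> beta_prime_density p q x"
  unfolding beta_prime_density_def by (simp add: Gamma_real_pos)
lemma be_nonneg: "0 < p \<Longrightarrow> 0 < q \<Longrightarrow> 0 \<le> beta_density p q x"
  unfolding beta_density_def by (simp add: Gamma_real_pos)

lemma be_has_integral:
  assumes "0 < p" "0 < q"
  shows "((\<lambda>x. beta_density p q x) has_integral 1) {0<..<1}"
proof -
  have "((\<lambda>t. BC p q * (t powr (p - 1) * (1 - t) powr (q - 1))) has_integral BC p q * Beta p q) {0<..<1}"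
    using has_integral_Beta_real[OF assms] by (intro has_integral_mult_right) (simp add: has_integral_Icc_iff_Ioo)
  then have "((\<lambda>t. BC p q * (t powr (p - 1) * (1 - t) powr (q - 1))) has_integral 1) {0<..<1}"
    using BC_Beta[OF assms] by simp
  then show ?thesis
    by (subst has_integral_cong[where g="\<lambda>t. BC p q * (t powr (p - 1) * (1 - t) powr (q - 1))"]) (auto simp: beta_density_def BC_def mult_ac)
qed

lemma be_norm:
  assumes "0 < p" "0 < q"
  shows "(\<integral>\<^sup>+x. ennreal (beta_density p q x) \<partial>lborel) = 1"
proof -
  have "(\<integral>\<^sup>+x. ennreal (beta_density p q x) * indicator {0<..<1} x \<partial>lborel) = ennreal 1"
    using be_has_integral[OF assms] be_nonneg[OF assms] by (intro nn_integral_has_integral_lebesgue') auto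
  moreover have "(\<integral>\<^sup>+x. ennreal (beta_density p q x) * indicator {0<..<1} x \<partial>lborel) =
     (\<integral>\<^sup>+x. ennreal (beta_density p q x) \<partial>lborel)"
    by (intro nn_integral_cong) (auto simp: beta_density_def indicator_def)
  ultimately show ?thesis by simp
qed


lemma L0_alg:
  fixes v p q :: real assumes v: "0 < v"
  shows "beta_prime_density p q v = \<bar>1 / (1 + v)^2\<bar> * beta_density p q (v / (1 + v))"
proof -
  have v1: "0 < 1 + v" using v by simp
  have lt: "v / (1 + v) < 1" using v by simp
  have pos: "0 < v / (1 + v)" using v by simp
  have e1: "1 - v / (1 + v) = 1 / (1 + v)" using v1 by (simp add: field_simps)
  have e2: "(1 + v) powr (p + q) = (1 + v) powr (p - 1) * (1 + v) powr (q - 1) * (1 + v)^2"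
  proof -
    have "(1 + v) powr (p - 1) * (1 + v) powr (q - 1) * (1 + v) powr 2 = (1 + v) powr ((p - 1) + (q - 1) + 2)"
      by (simp only: powr_add)
    also have "(p - 1) + (q - 1) + 2 = p + q" by simp
    finally show ?thesis using v1 by (simp add: powr_numeral)
  qed
  have "beta_density p q (v / (1 + v)) = Gamma (p + q) / (Gamma p * Gamma q) * (v powr (p - 1) / (1 + v) powr (p - 1)) * (1 / (1 + v) powr (q - 1))"
    unfolding beta_density_def using lt pos v v1 by (simp add: e1 powr_divide)
  then show ?thesis unfolding beta_prime_density_def using v v1 
    by (simp add: e2 divide_simps; auto simp: ac_simps)
qed

lemma phi_image: "(\<lambda>v::real. v / (1 + v)) ` {0<..} = {0<..<1}"
proof safe
  fix w :: real assume w: "w \<in> {0<..<1}"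
  then have w1: "1 - w \<noteq> 0" by auto
  have "1 + w / (1 - w) = 1 / (1 - w)" using w1 by (simp add: divide_simps)
  then have "w = (w / (1 - w)) / (1 + w / (1 - w))" using w1 by simp
  moreover have "w / (1 - w) \<in> {0<..}" using w by auto
  ultimately show "w \<in> (\<lambda>v. v / (1 + v)) ` {0<..}" by blast
qed auto

lemma L0:
  assumes p: "0 < p" and q: "0 < q"
  shows "beta_measure p q = distr (beta_prime_measure p q) borel (\<lambda>v. v / (1 + v))"
proof (rule measure_eqI)
  fix A :: "real set" assume A: "A \<in> sets (beta_measure p q)"
  then have A[measurable]: "A \<in> sets borel" by simp
  define fA where "fA w = beta_density p q w * indicator A w" for w
  have fA_meas[measurable]: "fA \<in> borel_measurable borel" unfolding fA_def by measurable
  have fA_nonneg: "0 \<le> fA w" for w unfolding fA_def using be_nonneg[OF p q] by simp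
  define b where "b = integral {0<..<1} fA"
  have abs: "fA absolutely_integrable_on {0<..<1}"
  proof (rule measurable_bounded_by_integrable_imp_absolutely_integrable[where g = "beta_density p q"])
    show "fA \<in> borel_measurable (lebesgue_on {0<..<1})"
      by (intro measurable_restrict_space1 measurable_completion) simp
    show "beta_density p q integrable_on {0<..<1}" using be_has_integral[OF p q] by blast
    show "norm (fA x) \<le> beta_density p q x" for x
      using fA_nonneg[of x] be_nonneg[OF p q, of x] by (simp add: fA_def indicator_def)
  qed auto
  have der: "((\<lambda>v. v / (1 + v)) has_field_derivative 1 / (1 + v)^2) (at v within {0<..})" if "v \<in> {0<..}" for v :: real
    using that by (auto intro!: derivative_eq_intros simp: field_simps power2_eq_square)
  have inj: "inj_on (\<lambda>v::real. v / (1 + v)) {0<..}"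
  proof (rule inj_onI)
    fix u v :: real assume "u \<in> {0<..}" "v \<in> {0<..}" "u / (1 + u) = v / (1 + v)"
    then have "u * (1 + v) = v * (1 + u)" by (simp add: frac_eq_eq)
    then show "u = v" by (simp add: algebra_simps)
  qed
  have "(\<lambda>v. \<bar>1 / (1 + v)^2\<bar> *\<^sub>R fA (v / (1 + v))) absolutely_integrable_on {0<..} \<and>
        integral {0<..} (\<lambda>v. \<bar>1 / (1 + v)^2\<bar> *\<^sub>R fA (v / (1 + v))) = b"
    using abs unfolding b_def
    by (subst has_absolute_integral_change_of_variables_real[OF _ der inj]) (auto simp: phi_image)
  then have hi2: "((\<lambda>v. \<bar>1 / (1 + v)^2\<bar> * fA (v / (1 + v))) has_integral b) {0<..}"
    using absolutely_integrable_on_def has_integral_integrable_integral by fastforce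
  have hi1: "(fA has_integral b) {0<..<1}"
    using abs unfolding b_def absolutely_integrable_on_def using has_integral_integrable_integral by blast
  have "emeasure (beta_measure p q) A = (\<integral>\<^sup>+w. ennreal (beta_density p q w) * indicator A w \<partial>lborel)"
    unfolding beta_measure_def by (subst emeasure_density) auto
  also have "\<dots> = (\<integral>\<^sup>+w. ennreal (fA w) * indicator {0<..<1} w \<partial>lborel)"
    by (intro nn_integral_cong) (auto simp: fA_def indicator_def beta_density_def)
  also have "\<dots> = ennreal b"
    by (rule nn_integral_has_integral_lebesgue'[OF _ hi1]) (simp add: fA_nonneg)
  also have "\<dots> = (\<integral>\<^sup>+v. ennreal (\<bar>1 / (1 + v)^2\<bar> * fA (v / (1 + v))) * indicator {0<..} v \<partial>lborel)"
    by (rule nn_integral_has_integral_lebesgue'[OF _ hi2, symmetric]) (simp add: fA_nonneg)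
  also have "\<dots> = (\<integral>\<^sup>+v. ennreal (beta_prime_density p q v) * indicator A (v / (1 + v)) \<partial>lborel)"
  proof (intro nn_integral_cong)
    fix v :: real
    show "ennreal (\<bar>1 / (1 + v)^2\<bar> * fA (v / (1 + v))) * indicator {0<..} v = ennreal (beta_prime_density p q v) * indicator A (v / (1 + v))"
    proof (cases "0 < v")
      case True
      then show ?thesis using L0_alg[OF True, of p q] by (simp add: fA_def indicator_def)
    qed (simp add: beta_prime_density_def)
  qed
  also have "\<dots> = emeasure (beta_prime_measure p q) ((\<lambda>v. v / (1 + v)) -` A)"
  proof -
    have "(\<lambda>v::real. v / (1 + v)) \<in> borel_measurable borel" by measurable
    from measurable_sets_borel[OF this A] have [measurable]: "(\<lambda>v::real. v / (1 + v)) -` A \<in> sets borel" by simp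
    show ?thesis unfolding beta_prime_measure_def
      by (subst emeasure_density) (auto intro!: nn_integral_cong split: split_indicator)
  qed
  also have "\<dots> = emeasure (distr (beta_prime_measure p q) borel (\<lambda>v. v / (1 + v))) A"
    by (subst emeasure_distr) (auto simp: beta_prime_measure_def)
  finally show "emeasure (beta_measure p q) A = emeasure (distr (beta_prime_measure p q) borel (\<lambda>v. v / (1 + v))) A" .
qed simp



lemma bp_pos_eq: "0 < x \<Longrightarrow> beta_prime_density p q x = BC p q * x powr (p - 1) / (1 + x) powr (p + q)"
  unfolding beta_prime_density_def BC_def by simp
lemma bp_nonpos: "x \<le> 0 \<Longrightarrow> beta_prime_density p q x = 0"
  unfolding beta_prime_density_def by simp

lemma space_bp[simp]: "space (beta_prime_measure p q) = UNIV"
  unfolding beta_prime_measure_def by simp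
lemma space_be[simp]: "space (beta_measure p q) = UNIV"
  unfolding beta_measure_def by simp

lemma bp_norm:
  assumes p: "0 < p" and q: "0 < q"
  shows "(\<integral>\<^sup>+x. ennreal (beta_prime_density p q x) \<partial>lborel) = 1"
proof -
  have "1 = emeasure (beta_measure p q) UNIV"
    using be_norm[OF p q] unfolding beta_measure_def by (subst emeasure_density) auto
  also have "\<dots> = emeasure (beta_prime_measure p q) UNIV"
    by (subst L0[OF p q]) (subst emeasure_distr, auto)
  also have "\<dots> = (\<integral>\<^sup>+x. ennreal (beta_prime_density p q x) \<partial>lborel)"
    unfolding beta_prime_measure_def by (subst emeasure_density) auto
  finally show ?thesis by simp
qed

lemma L0_nn:
  assumes p: "0 < p" and q: "0 < q" and g[measurable]: "g \<in> borel_measurable borel"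
  shows "(\<integral>\<^sup>+w. ennreal (beta_density p q w) * g w \<partial>lborel) =
         (\<integral>\<^sup>+v. ennreal (beta_prime_density p q v) * g (v / (1 + v)) \<partial>lborel)"
proof -
  have "(\<integral>\<^sup>+w. ennreal (beta_density p q w) * g w \<partial>lborel) = (\<integral>\<^sup>+w. g w \<partial>beta_measure p q)"
    unfolding beta_measure_def by (subst nn_integral_density) auto
  also have "\<dots> = (\<integral>\<^sup>+w. g w \<partial>distr (beta_prime_measure p q) borel (\<lambda>v. v / (1 + v)))"
    by (subst L0[OF p q]) simp
  also have "\<dots> = (\<integral>\<^sup>+v. g (v / (1 + v)) \<partial>beta_prime_measure p q)"
    by (subst nn_integral_distr) auto
  also have "\<dots> = (\<integral>\<^sup>+v. ennreal (beta_prime_density p q v) * g (v / (1 + v)) \<partial>lborel)"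
    unfolding beta_prime_measure_def by (subst nn_integral_density) auto
  finally show ?thesis .
qed

lemma scale:
  fixes c :: real
  assumes c: "0 < c" and f[measurable]: "f \<in> borel_measurable borel"
  shows "(\<integral>\<^sup>+x. f x \<partial>lborel) = ennreal c * (\<integral>\<^sup>+x. f (c * x) \<partial>lborel)"
  using nn_integral_real_affine[OF f, of c 0] c by simp



lemma BC_id:
  assumes "0 < a" "0 < b" "0 < e"
  shows "BC a (e + b) * BC e b = BC a b * BC e (a + b)"
proof -
  have g: "Gamma a \<noteq> 0" "Gamma b \<noteq> 0" "Gamma e \<noteq> 0" "Gamma (e+b) \<noteq> 0" "Gamma (a+b) \<noteq> 0"
    using Gamma_real_pos[of a] Gamma_real_pos[of b] Gamma_real_pos[of e] Gamma_real_pos[of "e+b"]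
      Gamma_real_pos[of "a+b"] assms by (auto simp del: Gamma_real_pos)
  have "a + (e + b) = e + (a + b)" by simp
  then show ?thesis unfolding BC_def using g by (simp add: field_simps)
qed

lemma K_alg:
  fixes x t a b e :: real
  assumes x: "0 < x" and t: "0 < t"
  shows "beta_prime_density a (e + b) (x / (1 + t)) * beta_prime_density e b t / (1 + t)
       = BC a (e + b) * BC e b * x powr (a - 1) * t powr (e - 1) / (1 + x + t) powr (a + (e + b))"
proof -
  have t1: "0 < 1 + t" using t by simp
  have xt: "0 < x / (1 + t)" using x t by simp
  have e1: "1 + x / (1 + t) = (1 + x + t) / (1 + t)" using t1 by (simp add: field_simps)
  have xt1: "0 < 1 + x + t" using x t by simp
  have P: "(1 + t) powr (a + (e + b)) = (1 + t) powr (a - 1) * (1 + t) * (1 + t) powr (e + b)"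
  proof -
    have "(1 + t) powr (a - 1) * (1 + t) powr 1 * (1 + t) powr (e + b) = (1 + t) powr ((a - 1) + 1 + (e + b))"
      by (simp only: powr_add)
    also have "(a - 1) + 1 + (e + b) = a + (e + b)" by simp
    finally show ?thesis using t1 by simp
  qed
  have B1: "beta_prime_density a (e + b) (x / (1 + t)) = BC a (e + b) * (x powr (a - 1) / (1 + t) powr (a - 1)) / ((1 + x + t) powr (a + (e + b)) / (1 + t) powr (a + (e + b)))"
    unfolding bp_pos_eq[OF xt] e1 using x t1 xt1 by (simp add: powr_divide less_imp_le)
  have B2: "beta_prime_density e b t = BC e b * t powr (e - 1) / (1 + t) powr (e + b)"
    using bp_pos_eq[OF t] by (simp add: add.commute)
  have pos: "0 < (1 + t) powr (a - 1)" "0 < (1 + t) powr (e + b)" "0 < (1 + x + t) powr (a + (e + b))"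
    using t1 xt1 by auto
  have abstr: "C1 * (X / P1) / (Q / (P1 * T * P2)) * (C2 * Y / P2) / T = C1 * C2 * X * Y / Q"
    if "P1 \<noteq> 0" "P2 \<noteq> 0" "T \<noteq> 0" "Q \<noteq> 0" for C1 C2 X Y P1 P2 Q T :: real
    using that by (simp add: field_simps)
  show ?thesis
    unfolding B1 B2 P using pos t1
    by (subst abstr) auto
qed

lemma I_alg:
  fixes x u a b e :: real
  assumes x: "0 < x" and u: "0 < u" and pa: "0 < a" and pb: "0 < b" and pe: "0 < e"
  shows "BC a (e + b) * BC e b * x powr (a - 1) * ((1 + x) * u) powr (e - 1) / (1 + x + (1 + x) * u) powr (a + (e + b)) * (1 + x)
       = beta_prime_density a b x * beta_prime_density e (a + b) u"
proof -
  have x1: "0 < 1 + x" and u1: "0 < 1 + u" using x u by auto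
  have m1: "((1 + x) * u) powr (e - 1) = (1 + x) powr (e - 1) * u powr (e - 1)"
    using x1 u by (simp add: powr_mult)
  have "1 + x + (1 + x) * u = (1 + x) * (1 + u)" by (simp add: algebra_simps)
  then have m2: "(1 + x + (1 + x) * u) powr (a + (e + b)) = (1 + x) powr (a + (e + b)) * (1 + u) powr (a + (e + b))"
    using x1 u1 by (simp add: powr_mult)
  have P: "(1 + x) powr (a + (e + b)) = (1 + x) powr (e - 1) * (1 + x) * (1 + x) powr (a + b)"
  proof -
    have "(1 + x) powr (e - 1) * (1 + x) powr 1 * (1 + x) powr (a + b) = (1 + x) powr ((e - 1) + 1 + (a + b))"
      by (simp only: powr_add)
    also have "(e - 1) + 1 + (a + b) = a + (e + b)" by simp
    finally show ?thesis using x1 by simp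
  qed
  have ex: "e + (a + b) = a + (e + b)" by simp
  have R: "beta_prime_density a b x * beta_prime_density e (a + b) u =
     (BC a b * x powr (a - 1) / (1 + x) powr (a + b)) * (BC e (a + b) * u powr (e - 1) / (1 + u) powr (a + (e + b)))"
    unfolding bp_pos_eq[OF x] bp_pos_eq[OF u] ex ..
  have abstr: "C1 * C2 * X * (P1 * U) / ((P1 * T * P2) * Q) * T = (C3 * X / P2) * (C4 * U / Q)"
    if "C1 * C2 = C3 * C4" "P1 \<noteq> 0" "P2 \<noteq> 0" "T \<noteq> 0" "Q \<noteq> 0" for C1 C2 C3 C4 X U P1 P2 Q T :: real
    using that by (simp add: field_simps)
  have pos: "0 < (1 + x) powr (e - 1)" "0 < (1 + x) powr (a + b)" "0 < (1 + u) powr (a + (e + b))"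
    using x1 u1 by auto
  show ?thesis
    unfolding R m1 m2 P using pos x1 BC_id[OF pa pb pe]
    by (subst abstr) auto
qed

lemma inner_int:
  fixes a b e x :: real
  assumes pa: "0 < a" and pb: "0 < b" and pe: "0 < e"
  shows "(\<integral>\<^sup>+t. ennreal (beta_prime_density a (e + b) (x / (1 + t)) * beta_prime_density e b t / (1 + t)) \<partial>lborel)
         = ennreal (beta_prime_density a b x)"
proof (cases "0 < x")
  case False
  have "(\<integral>\<^sup>+t. ennreal (beta_prime_density a (e + b) (x / (1 + t)) * beta_prime_density e b t / (1 + t)) \<partial>lborel)
       = (\<integral>\<^sup>+(t::real). 0 \<partial>lborel)"
  proof (intro nn_integral_cong)
    fix t :: real
    show "ennreal (beta_prime_density a (e + b) (x / (1 + t)) * beta_prime_density e b t / (1 + t)) = 0"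
    proof (cases "0 < t")
      case True
      then have "x / (1 + t) \<le> 0" using False by (simp add: divide_nonpos_pos)
      then show ?thesis by (simp add: bp_nonpos)
    qed (simp add: bp_nonpos)
  qed
  then show ?thesis using False by (simp add: bp_nonpos)
next
  case x: True
  define F where "F t = beta_prime_density a (e + b) (x / (1 + t)) * beta_prime_density e b t / (1 + t)" for t
  have Fm[measurable]: "F \<in> borel_measurable borel" unfolding F_def by measurable
  have x1: "0 < 1 + x" using x by simp
  have "(\<integral>\<^sup>+t. ennreal (F t) \<partial>lborel) = ennreal (1 + x) * (\<integral>\<^sup>+u. ennreal (F ((1 + x) * u)) \<partial>lborel)"
    by (rule scale[OF x1]) measurable
  also have "\<dots> = (\<integral>\<^sup>+u. ennreal (1 + x) * ennreal (F ((1 + x) * u)) \<partial>lborel)"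
    by (rule nn_integral_cmult[symmetric]) measurable
  also have "\<dots> = (\<integral>\<^sup>+u. ennreal (beta_prime_density a b x) * ennreal (beta_prime_density e (a + b) u) \<partial>lborel)"
  proof (intro nn_integral_cong)
    fix u :: real
    show "ennreal (1 + x) * ennreal (F ((1 + x) * u)) = ennreal (beta_prime_density a b x) * ennreal (beta_prime_density e (a + b) u)"
    proof (cases "0 < u")
      case u: True
      have t: "0 < (1 + x) * u" using x1 u by simp
      have Fv: "F ((1 + x) * u) = BC a (e + b) * BC e b * x powr (a - 1) * ((1 + x) * u) powr (e - 1) / (1 + x + (1 + x) * u) powr (a + (e + b))"
        unfolding F_def using K_alg[OF x t, of a e b] by simp
      have "(1 + x) * F ((1 + x) * u) = beta_prime_density a b x * beta_prime_density e (a + b) u"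
        using I_alg[OF x u pa pb pe] unfolding Fv by (simp add: mult_ac)
      moreover have "0 \<le> F ((1 + x) * u)" unfolding F_def using t
        by (intro divide_nonneg_pos mult_nonneg_nonneg bp_nonneg) (use pa pb pe in auto)
      ultimately show ?thesis using x1 bp_nonneg[OF pa pb, of x] bp_nonneg[OF pe, of "a+b" u] pa pb
        by (simp add: ennreal_mult'[symmetric])
    next
      case False
      then have "(1 + x) * u \<le> 0" using x1 by (simp add: mult_nonneg_nonpos)
      then show ?thesis using False by (simp add: F_def bp_nonpos)
    qed
  qed
  also have "\<dots> = ennreal (beta_prime_density a b x) * (\<integral>\<^sup>+u. ennreal (beta_prime_density e (a + b) u) \<partial>lborel)"
    by (rule nn_integral_cmult) measurable
  also have "\<dots> = ennreal (beta_prime_density a b x)"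
    using bp_norm[OF pe, of "a + b"] pa pb by simp
  finally show ?thesis unfolding F_def .
qed

lemma swap:
  fixes f :: "real \<Rightarrow> real \<Rightarrow> ennreal"
  assumes "(\<lambda>(x, y). f x y) \<in> borel_measurable (lborel \<Otimes>\<^sub>M lborel)"
  shows "(\<integral>\<^sup>+x. (\<integral>\<^sup>+y. f x y \<partial>lborel) \<partial>lborel) = (\<integral>\<^sup>+y. (\<integral>\<^sup>+x. f x y \<partial>lborel) \<partial>lborel)"
  using lborel_pair.Fubini'[OF assms] by simp

lemma L2:
  fixes a b e :: real and g :: "real \<Rightarrow> ennreal"
  assumes pa: "0 < a" and pb: "0 < b" and pe: "0 < e" and g[measurable]: "g \<in> borel_measurable borel"
  shows "(\<integral>\<^sup>+r. ennreal (beta_prime_density a (e + b) r) * (\<integral>\<^sup>+t. ennreal (beta_prime_density e b t) * g (r * (1 + t)) \<partial>lborel) \<partial>lborel)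
       = (\<integral>\<^sup>+x. ennreal (beta_prime_density a b x) * g x \<partial>lborel)"
proof -
  have "(\<integral>\<^sup>+r. ennreal (beta_prime_density a (e + b) r) * (\<integral>\<^sup>+t. ennreal (beta_prime_density e b t) * g (r * (1 + t)) \<partial>lborel) \<partial>lborel)
      = (\<integral>\<^sup>+r. (\<integral>\<^sup>+t. ennreal (beta_prime_density a (e + b) r) * (ennreal (beta_prime_density e b t) * g (r * (1 + t))) \<partial>lborel) \<partial>lborel)"
    by (intro nn_integral_cong nn_integral_cmult[symmetric]) measurable
  also have "\<dots> = (\<integral>\<^sup>+t. (\<integral>\<^sup>+r. ennreal (beta_prime_density a (e + b) r) * (ennreal (beta_prime_density e b t) * g (r * (1 + t))) \<partial>lborel) \<partial>lborel)"
    by (rule swap) measurable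
  also have "\<dots> = (\<integral>\<^sup>+t. (\<integral>\<^sup>+x. ennreal (beta_prime_density a (e + b) (x / (1 + t)) * beta_prime_density e b t / (1 + t)) * g x \<partial>lborel) \<partial>lborel)"
  proof (rule nn_integral_cong)
    fix t :: real
    show "(\<integral>\<^sup>+r. ennreal (beta_prime_density a (e + b) r) * (ennreal (beta_prime_density e b t) * g (r * (1 + t))) \<partial>lborel)
        = (\<integral>\<^sup>+x. ennreal (beta_prime_density a (e + b) (x / (1 + t)) * beta_prime_density e b t / (1 + t)) * g x \<partial>lborel)"
    proof (cases "0 < t")
      case False
      then show ?thesis by (simp add: bp_nonpos)
    next
      case True
      then have t1: "0 < 1 + t" by simp
      have c: "0 < 1 / (1 + t)" using t1 by simp
      have "(\<integral>\<^sup>+r. ennreal (beta_prime_density a (e + b) r) * (ennreal (beta_prime_density e b t) * g (r * (1 + t))) \<partial>lborel)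
         = ennreal (1 / (1 + t)) * (\<integral>\<^sup>+x. ennreal (beta_prime_density a (e + b) (1 / (1 + t) * x)) * (ennreal (beta_prime_density e b t) * g (1 / (1 + t) * x * (1 + t))) \<partial>lborel)"
        by (rule scale[OF c]) measurable
      also have "\<dots> = (\<integral>\<^sup>+x. ennreal (1 / (1 + t)) * (ennreal (beta_prime_density a (e + b) (1 / (1 + t) * x)) * (ennreal (beta_prime_density e b t) * g (1 / (1 + t) * x * (1 + t)))) \<partial>lborel)"
        by (rule nn_integral_cmult[symmetric]) measurable
      also have "\<dots> = (\<integral>\<^sup>+x. ennreal (beta_prime_density a (e + b) (x / (1 + t)) * beta_prime_density e b t / (1 + t)) * g x \<partial>lborel)"
      proof (rule nn_integral_cong)
        fix x :: real
        have nn: "0 \<le> beta_prime_density a (e + b) (x / (1 + t))" "0 \<le> beta_prime_density e b t"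
          using bp_nonneg pa pb pe by auto
        have "1 / (1 + t) * x * (1 + t) = x" using t1 by simp
        moreover have "1 / (1 + t) * x = x / (1 + t)" by simp
        show "ennreal (1 / (1 + t)) * (ennreal (beta_prime_density a (e + b) (1 / (1 + t) * x)) * (ennreal (beta_prime_density e b t) * g (1 / (1 + t) * x * (1 + t))))
           = ennreal (beta_prime_density a (e + b) (x / (1 + t)) * beta_prime_density e b t / (1 + t)) * g x"
        proof -
          let ?A = "beta_prime_density a (e + b) (x / (1 + t))" and ?B = "beta_prime_density e b t"
          have "?A * ?B / (1 + t) = 1 / (1 + t) * (?A * ?B)" by simp
          then have "ennreal (?A * ?B / (1 + t)) = ennreal (1 / (1 + t)) * (ennreal ?A * ennreal ?B)"
            using nn t1 by (simp only: ennreal_mult mult_nonneg_nonneg less_imp_le divide_nonneg_pos zero_le_one)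
          moreover have gx: "g (1 / (1 + t) * x * (1 + t)) = g x" using t1 by simp
          ultimately show ?thesis unfolding gx \<open>1 / (1 + t) * x = x / (1 + t)\<close>
            by (simp only: mult_ac)
        qed
      qed
      finally show ?thesis .
    qed
  qed
  also have "\<dots> = (\<integral>\<^sup>+x. (\<integral>\<^sup>+t. ennreal (beta_prime_density a (e + b) (x / (1 + t)) * beta_prime_density e b t / (1 + t)) * g x \<partial>lborel) \<partial>lborel)"
    by (rule swap[symmetric]) measurable
  also have "\<dots> = (\<integral>\<^sup>+x. (\<integral>\<^sup>+t. ennreal (beta_prime_density a (e + b) (x / (1 + t)) * beta_prime_density e b t / (1 + t)) \<partial>lborel) * g x \<partial>lborel)"
    by (intro nn_integral_cong nn_integral_multc) measurable
  also have "\<dots> = (\<integral>\<^sup>+x. ennreal (beta_prime_density a b x) * g x \<partial>lborel)"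
    using inner_int[OF pa pb pe] by simp
  finally show ?thesis .
qed



lemma BC_id2:
  assumes "0 < a" "0 < c" "0 < d"
  shows "BC (a + c) d * BC a c = BC c d * BC a (c + d)"
proof -
  have g: "Gamma a \<noteq> 0" "Gamma c \<noteq> 0" "Gamma d \<noteq> 0" "Gamma (a+c) \<noteq> 0" "Gamma (c+d) \<noteq> 0"
    using Gamma_real_pos[of a] Gamma_real_pos[of c] Gamma_real_pos[of d] Gamma_real_pos[of "a+c"]
      Gamma_real_pos[of "c+d"] assms by (auto simp del: Gamma_real_pos)
  have "a + c + d = a + (c + d)" by simp
  then show ?thesis unfolding BC_def using g by (simp add: field_simps)
qed

lemma S5_alg:
  fixes a c d q r :: real
  assumes q: "0 < q" and r: "0 < r" and pa: "0 < a" and pc: "0 < c" and pd: "0 < d"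
  defines "v \<equiv> (1 + q) / q * r"
  shows "(1 + q) / q * ((1 + v) * (beta_prime_density (a + c) d ((1 + v) * q) * beta_prime_density a c v))
       = beta_prime_density c d q * beta_prime_density a (c + d) r"
proof -
  define m where "m = q + (1 + q) * r"
  have q1: "0 < 1 + q" and r1: "0 < 1 + r" using q r by auto
  have m: "0 < m" unfolding m_def using q r by (simp add: add_pos_pos)
  have v: "0 < v" unfolding v_def using q r by simp
  have e1: "(1 + v) * q = m" unfolding v_def m_def using q by (simp add: field_simps)
  have e1': "1 + v = m / q" using e1 q by (simp add: field_simps)
  have e2: "1 + m = (1 + q) * (1 + r)" unfolding m_def by (simp add: algebra_simps)
  have p2: "(1 + m) powr (a + c + d) = (1 + q) powr (a + c + d) * (1 + r) powr (a + c + d)"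
    unfolding e2 using q1 r1 by (simp add: powr_mult)
  have p3: "v powr (a - 1) = (1 + q) powr (a - 1) * r powr (a - 1) / q powr (a - 1)"
    unfolding v_def using q1 q r by (simp add: powr_mult powr_divide less_imp_le)
  have p4: "(1 + v) powr (a + c) = m powr (a + c) / q powr (a + c)"
    unfolding e1' using q m by (simp add: powr_divide less_imp_le)
  have M: "m powr (a + c) = m * m powr (a + c - 1)"
  proof -
    have "m powr 1 * m powr (a + c - 1) = m powr (1 + (a + c - 1))" by (simp only: powr_add)
    then show ?thesis using m by simp
  qed
  have Q: "q powr (a + c) = q powr (a - 1) * q * q * q powr (c - 1)"
  proof -
    have "q powr (a - 1) * q powr 1 * q powr 1 * q powr (c - 1) = q powr ((a - 1) + 1 + 1 + (c - 1))" by (simp only: powr_add)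
    also have "(a - 1) + 1 + 1 + (c - 1) = a + c" by simp
    finally show ?thesis using q by simp
  qed
  have Q1: "(1 + q) powr (a + c + d) = (1 + q) powr (a - 1) * (1 + q) * (1 + q) powr (c + d)"
  proof -
    have "(1 + q) powr (a - 1) * (1 + q) powr 1 * (1 + q) powr (c + d) = (1 + q) powr ((a - 1) + 1 + (c + d))" by (simp only: powr_add)
    also have "(a - 1) + 1 + (c + d) = a + c + d" by simp
    finally show ?thesis using q1 by simp
  qed
  have R1: "(1 + r) powr (a + (c + d)) = (1 + r) powr (a + c + d)" by (simp add: add.assoc)
  have L: "beta_prime_density (a + c) d ((1 + v) * q) = BC (a + c) d * m powr (a + c - 1) / (1 + m) powr (a + c + d)"
    unfolding e1 bp_pos_eq[OF m] ..
  have L2: "beta_prime_density a c v = BC a c * v powr (a - 1) / (1 + v) powr (a + c)"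
    using bp_pos_eq[OF v, of a c] .
  have Rq: "beta_prime_density c d q = BC c d * q powr (c - 1) / (1 + q) powr (c + d)"
    using bp_pos_eq[OF q, of c d] .
  have Rr: "beta_prime_density a (c + d) r = BC a (c + d) * r powr (a - 1) / (1 + r) powr (a + c + d)"
    using bp_pos_eq[OF r, of a "c + d"] unfolding R1 .
  have abstr: "(Q1' / q) * ((m / q) * ((C1 * MM / (QA * Q1' * QCD * RR)) * (C2 * (QA * RA / qa) / ((m * MM) / (qa * q * q * qc)))))
      = (C3 * qc / QCD) * (C4 * RA / RR)"
    if "C1 * C2 = C3 * C4" "q \<noteq> 0" "m \<noteq> 0" "MM \<noteq> 0" "Q1' \<noteq> 0" "QA \<noteq> 0" "QCD \<noteq> 0" "RR \<noteq> 0" "qa \<noteq> 0" "qc \<noteq> 0"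
    for C1 C2 C3 C4 MM Q1' QA QCD RR RA qa qc :: real
    using that by (simp add: field_simps)
  have pos: "0 < m powr (a + c - 1)" "0 < (1 + q) powr (a - 1)" "0 < (1 + q) powr (c + d)"
     "0 < (1 + r) powr (a + c + d)" "0 < q powr (a - 1)" "0 < q powr (c - 1)"
    using m q q1 r1 by auto
  show ?thesis
    unfolding L L2 Rq Rr p2 p3 p4 unfolding M Q Q1 e1'
    by (rule abstr) (use BC_id2[OF pa pc pd] pos q m q1 in auto)
qed



lemma swap2:
  fixes f g :: "real \<Rightarrow> ennreal" and H :: "real \<Rightarrow> real \<Rightarrow> ennreal"
  assumes [measurable]: "f \<in> borel_measurable borel" "g \<in> borel_measurable borel"
    and H[measurable]: "(\<lambda>(x, y). H x y) \<in> borel_measurable (lborel \<Otimes>\<^sub>M lborel)"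
  shows "(\<integral>\<^sup>+x. f x * (\<integral>\<^sup>+y. g y * H x y \<partial>lborel) \<partial>lborel) = (\<integral>\<^sup>+y. g y * (\<integral>\<^sup>+x. f x * H x y \<partial>lborel) \<partial>lborel)"
proof -
  have Hx[measurable]: "H x \<in> borel_measurable borel" for x
    using measurable_Pair2[OF H, of x] by simp
  have Hy[measurable]: "(\<lambda>x. H x y) \<in> borel_measurable borel" for y
    using measurable_Pair1[OF H, of y] by simp
  have "(\<integral>\<^sup>+x. f x * (\<integral>\<^sup>+y. g y * H x y \<partial>lborel) \<partial>lborel) = (\<integral>\<^sup>+x. (\<integral>\<^sup>+y. f x * (g y * H x y) \<partial>lborel) \<partial>lborel)"
    by (intro nn_integral_cong nn_integral_cmult[symmetric]) measurable
  also have "\<dots> = (\<integral>\<^sup>+y. (\<integral>\<^sup>+x. f x * (g y * H x y) \<partial>lborel) \<partial>lborel)"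
    by (rule swap) measurable
  also have "\<dots> = (\<integral>\<^sup>+y. (\<integral>\<^sup>+x. g y * (f x * H x y) \<partial>lborel) \<partial>lborel)"
    by (intro nn_integral_cong) (simp add: mult_ac)
  also have "\<dots> = (\<integral>\<^sup>+y. g y * (\<integral>\<^sup>+x. f x * H x y \<partial>lborel) \<partial>lborel)"
    by (intro nn_integral_cong nn_integral_cmult) measurable
  finally show ?thesis .
qed

lemma pair_int_bp:
  assumes "sigma_finite_measure N"
    and H: "H \<in> borel_measurable (beta_prime_measure p q \<Otimes>\<^sub>M N)"
  shows "(\<integral>\<^sup>+\<omega>. H \<omega> \<partial>(beta_prime_measure p q \<Otimes>\<^sub>M N)) = (\<integral>\<^sup>+x. ennreal (beta_prime_density p q x) * (\<integral>\<^sup>+y. H (x,y) \<partial>N) \<partial>lborel)"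
  using pair_int[OF assms(1), of "\<lambda>x. ennreal (beta_prime_density p q x)" H] H unfolding beta_prime_measure_def by simp

lemma pair_int_be:
  assumes "sigma_finite_measure N"
    and H: "H \<in> borel_measurable (beta_measure p q \<Otimes>\<^sub>M N)"
  shows "(\<integral>\<^sup>+\<omega>. H \<omega> \<partial>(beta_measure p q \<Otimes>\<^sub>M N)) = (\<integral>\<^sup>+x. ennreal (beta_density p q x) * (\<integral>\<^sup>+y. H (x,y) \<partial>N) \<partial>lborel)"
  using pair_int[OF assms(1), of "\<lambda>x. ennreal (beta_density p q x)" H] H unfolding beta_measure_def by simp

lemma int_bp:
  assumes "g \<in> borel_measurable borel"
  shows "(\<integral>\<^sup>+y. g y \<partial>beta_prime_measure p q) = (\<integral>\<^sup>+y. ennreal (beta_prime_density p q y) * g y \<partial>lborel)"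
  unfolding beta_prime_measure_def using assms by (subst nn_integral_density) auto

lemma LHS_eq:
  fixes a b c d :: real and h :: "real \<Rightarrow> ennreal"
  assumes h[measurable]: "h \<in> borel_measurable borel"
  shows "(\<integral>\<^sup>+\<omega>. h ((\<lambda>(x, y). (1 + x) * (1 + y) - 1) \<omega>) \<partial>(beta_prime_measure a b \<Otimes>\<^sub>M beta_prime_measure c d))
       = (\<integral>\<^sup>+y. ennreal (beta_prime_density c d y) * (\<integral>\<^sup>+x. ennreal (beta_prime_density a b x) * h ((1 + x) * (1 + y) - 1) \<partial>lborel) \<partial>lborel)"
proof -
  have "(\<integral>\<^sup>+\<omega>. h ((\<lambda>(x, y). (1 + x) * (1 + y) - 1) \<omega>) \<partial>(beta_prime_measure a b \<Otimes>\<^sub>M beta_prime_measure c d))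
     = (\<integral>\<^sup>+x. ennreal (beta_prime_density a b x) * (\<integral>\<^sup>+y. h ((1 + x) * (1 + y) - 1) \<partial>beta_prime_measure c d) \<partial>lborel)"
    by (subst pair_int_bp[OF sf_bp]) (simp_all, measurable)
  also have "\<dots> = (\<integral>\<^sup>+x. ennreal (beta_prime_density a b x) * (\<integral>\<^sup>+y. ennreal (beta_prime_density c d y) * h ((1 + x) * (1 + y) - 1) \<partial>lborel) \<partial>lborel)"
    by (intro nn_integral_cong arg_cong2[where f="(*)"] refl int_bp) measurable
  also have "\<dots> = (\<integral>\<^sup>+y. ennreal (beta_prime_density c d y) * (\<integral>\<^sup>+x. ennreal (beta_prime_density a b x) * h ((1 + x) * (1 + y) - 1) \<partial>lborel) \<partial>lborel)"
    by (rule swap2) measurable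
  finally show ?thesis .
qed



lemma RHS_start:
  fixes a b c d e :: real and h :: "real \<Rightarrow> ennreal"
  assumes h[measurable]: "h \<in> borel_measurable borel"
  shows "(\<integral>\<^sup>+\<omega>. h ((\<lambda>(x, u, v). x * (1 + u * v)) \<omega>) \<partial>(beta_prime_measure (a + c) d \<Otimes>\<^sub>M (beta_measure a c \<Otimes>\<^sub>M beta_prime_measure e b)))
     = (\<integral>\<^sup>+z. ennreal (beta_prime_density (a + c) d z) * (\<integral>\<^sup>+w. ennreal (beta_density a c w) *
          (\<integral>\<^sup>+t. ennreal (beta_prime_density e b t) * h (z * (1 + w * t)) \<partial>lborel) \<partial>lborel) \<partial>lborel)"
proof -
  have sf: "sigma_finite_measure (beta_measure a c \<Otimes>\<^sub>M beta_prime_measure e b)"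
    by (intro sigma_finite_pair_measure sf_be sf_bp)
  have "(\<integral>\<^sup>+\<omega>. h ((\<lambda>(x, u, v). x * (1 + u * v)) \<omega>) \<partial>(beta_prime_measure (a + c) d \<Otimes>\<^sub>M (beta_measure a c \<Otimes>\<^sub>M beta_prime_measure e b)))
     = (\<integral>\<^sup>+z. ennreal (beta_prime_density (a + c) d z) * (\<integral>\<^sup>+y. h ((\<lambda>(u, v). z * (1 + u * v)) y) \<partial>(beta_measure a c \<Otimes>\<^sub>M beta_prime_measure e b)) \<partial>lborel)"
    by (subst pair_int_bp[OF sf]) (simp_all add: split_beta', measurable)
  also have "\<dots> = (\<integral>\<^sup>+z. ennreal (beta_prime_density (a + c) d z) * (\<integral>\<^sup>+w. ennreal (beta_density a c w) *
          (\<integral>\<^sup>+t. h (z * (1 + w * t)) \<partial>beta_prime_measure e b) \<partial>lborel) \<partial>lborel)"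
    by (intro nn_integral_cong arg_cong2[where f="(*)"] refl, subst pair_int_be[OF sf_bp]) (simp_all, measurable)
  also have "\<dots> = (\<integral>\<^sup>+z. ennreal (beta_prime_density (a + c) d z) * (\<integral>\<^sup>+w. ennreal (beta_density a c w) *
          (\<integral>\<^sup>+t. ennreal (beta_prime_density e b t) * h (z * (1 + w * t)) \<partial>lborel) \<partial>lborel) \<partial>lborel)"
    by (intro nn_integral_cong arg_cong2[where f="(*)"] refl int_bp) measurable
  finally show ?thesis .
qed



lemma arg_alg:
  fixes q r t :: real assumes q: "0 < q" and r: "0 < r"
  defines "v \<equiv> (1 + q) / q * r"
  shows "(1 + v) * q * (1 + v / (1 + v) * t) = (1 + q) * (1 + r * (1 + t)) - 1"
proof -
  have v: "0 < v" unfolding v_def using q r by simp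
  have "(1 + v) * q * (1 + v / (1 + v) * t) = q + q * v * (1 + t)"
    using v by (simp add: field_simps)
  also have "q * v = (1 + q) * r" unfolding v_def using q by simp
  finally show ?thesis by (simp add: algebra_simps)
qed

lemma RHS_chain:
  fixes a b c d e :: real and h :: "real \<Rightarrow> ennreal"
  assumes pa: "0 < a" and pb: "0 < b" and pc: "0 < c" and pd: "0 < d" and pe: "0 < e" and eb: "e + b = c + d"
    and h[measurable]: "h \<in> borel_measurable borel"
  shows "(\<integral>\<^sup>+z. ennreal (beta_prime_density (a + c) d z) * (\<integral>\<^sup>+w. ennreal (beta_density a c w) *
          (\<integral>\<^sup>+t. ennreal (beta_prime_density e b t) * h (z * (1 + w * t)) \<partial>lborel) \<partial>lborel) \<partial>lborel)
     = (\<integral>\<^sup>+q. ennreal (beta_prime_density c d q) * (\<integral>\<^sup>+x. ennreal (beta_prime_density a b x) * h ((1 + q) * (1 + x) - 1) \<partial>lborel) \<partial>lborel)"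
proof -
  define G where "G z w = (\<integral>\<^sup>+t. ennreal (beta_prime_density e b t) * h (z * (1 + w * t)) \<partial>lborel)" for z w
  have Gm[measurable]: "(\<lambda>(z, w). G z w) \<in> borel_measurable (lborel \<Otimes>\<^sub>M lborel)"
    unfolding G_def by measurable
  have Gm1[measurable]: "G z \<in> borel_measurable borel" for z
    using measurable_Pair2[OF Gm, of z] by simp
  have Gm2[measurable]: "(\<lambda>z. G z w) \<in> borel_measurable borel" for w
    using measurable_Pair1[OF Gm, of w] by simp
  let ?Bz = "\<lambda>z. ennreal (beta_prime_density (a + c) d z)"
  let ?Bv = "\<lambda>v. ennreal (beta_prime_density a c v)"
  have "(\<integral>\<^sup>+z. ?Bz z * (\<integral>\<^sup>+w. ennreal (beta_density a c w) * G z w \<partial>lborel) \<partial>lborel)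
      = (\<integral>\<^sup>+z. ?Bz z * (\<integral>\<^sup>+v. ?Bv v * G z (v / (1 + v)) \<partial>lborel) \<partial>lborel)"
    by (intro nn_integral_cong arg_cong2[where f="(*)"] refl L0_nn pa pc) measurable
  also have "\<dots> = (\<integral>\<^sup>+v. ?Bv v * (\<integral>\<^sup>+z. ?Bz z * G z (v / (1 + v)) \<partial>lborel) \<partial>lborel)"
    by (rule swap2) measurable
  also have "\<dots> = (\<integral>\<^sup>+v. (\<integral>\<^sup>+q. ennreal ((1 + v) * beta_prime_density (a + c) d ((1 + v) * q) * beta_prime_density a c v) * G ((1 + v) * q) (v / (1 + v)) \<partial>lborel) \<partial>lborel)"
  proof (rule nn_integral_cong)
    fix v :: real
    show "?Bv v * (\<integral>\<^sup>+z. ?Bz z * G z (v / (1 + v)) \<partial>lborel) = (\<integral>\<^sup>+q. ennreal ((1 + v) * beta_prime_density (a + c) d ((1 + v) * q) * beta_prime_density a c v) * G ((1 + v) * q) (v / (1 + v)) \<partial>lborel)"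
    proof (cases "0 < v")
      case False
      then show ?thesis by (simp add: bp_nonpos)
    next
      case True
      then have v1: "0 < 1 + v" by simp
      have "?Bv v * (\<integral>\<^sup>+z. ?Bz z * G z (v / (1 + v)) \<partial>lborel) = ?Bv v * (ennreal (1 + v) * (\<integral>\<^sup>+q. ?Bz ((1 + v) * q) * G ((1 + v) * q) (v / (1 + v)) \<partial>lborel))"
        by (subst scale[OF v1]) (simp_all, measurable)
      also have "\<dots> = (\<integral>\<^sup>+q. (?Bv v * ennreal (1 + v)) * (?Bz ((1 + v) * q) * G ((1 + v) * q) (v / (1 + v))) \<partial>lborel)"
        by (subst nn_integral_cmult) (simp_all add: mult.assoc, measurable)
      also have "\<dots> = (\<integral>\<^sup>+q. ennreal ((1 + v) * beta_prime_density (a + c) d ((1 + v) * q) * beta_prime_density a c v) * G ((1 + v) * q) (v / (1 + v)) \<partial>lborel)"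
      proof (rule nn_integral_cong)
        fix q :: real
        have nn: "0 \<le> beta_prime_density (a + c) d ((1 + v) * q)" "0 \<le> beta_prime_density a c v"
          using bp_nonneg pa pc pd by auto
        show "(?Bv v * ennreal (1 + v)) * (?Bz ((1 + v) * q) * G ((1 + v) * q) (v / (1 + v))) = ennreal ((1 + v) * beta_prime_density (a + c) d ((1 + v) * q) * beta_prime_density a c v) * G ((1 + v) * q) (v / (1 + v))"
          using nn v1 by (simp add: ennreal_mult mult_ac)
      qed
      finally show ?thesis .
    qed
  qed
  also have "\<dots> = (\<integral>\<^sup>+q. (\<integral>\<^sup>+v. ennreal ((1 + v) * beta_prime_density (a + c) d ((1 + v) * q) * beta_prime_density a c v) * G ((1 + v) * q) (v / (1 + v)) \<partial>lborel) \<partial>lborel)"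
    by (rule swap) measurable
  also have "\<dots> = (\<integral>\<^sup>+q. ennreal (beta_prime_density c d q) * (\<integral>\<^sup>+r. ennreal (beta_prime_density a (e + b) r) *
        (\<integral>\<^sup>+t. ennreal (beta_prime_density e b t) * h ((1 + q) * (1 + r * (1 + t)) - 1) \<partial>lborel) \<partial>lborel) \<partial>lborel)"
  proof (rule nn_integral_cong)
    fix q :: real
    define Gt where "Gt r = (\<integral>\<^sup>+t. ennreal (beta_prime_density e b t) * h ((1 + q) * (1 + r * (1 + t)) - 1) \<partial>lborel)" for r
    have Gtm[measurable]: "Gt \<in> borel_measurable borel" unfolding Gt_def by measurable
    define X where "X v = ennreal ((1 + v) * beta_prime_density (a + c) d ((1 + v) * q) * beta_prime_density a c v) * G ((1 + v) * q) (v / (1 + v))" for v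
    have Xm[measurable]: "X \<in> borel_measurable borel" unfolding X_def by measurable
    have "(\<integral>\<^sup>+v. X v \<partial>lborel) = ennreal (beta_prime_density c d q) * (\<integral>\<^sup>+r. ennreal (beta_prime_density a (e + b) r) * Gt r \<partial>lborel)"
    proof (cases "0 < q")
      case False
      have "X v = 0" for v
      proof (cases "0 < v")
        case True
        then have "(1 + v) * q \<le> 0" using False by (simp add: mult_nonneg_nonpos)
        then show ?thesis by (simp add: X_def bp_nonpos)
      qed (simp add: X_def bp_nonpos)
      then show ?thesis using False by (simp add: bp_nonpos)
    next
      case q: True
      have k: "0 < (1 + q) / q" using q by simp
      have "(\<integral>\<^sup>+v. X v \<partial>lborel) = ennreal ((1 + q) / q) * (\<integral>\<^sup>+r. X ((1 + q) / q * r) \<partial>lborel)"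
        by (rule scale[OF k]) measurable
      also have "\<dots> = (\<integral>\<^sup>+r. ennreal ((1 + q) / q) * X ((1 + q) / q * r) \<partial>lborel)"
        by (rule nn_integral_cmult[symmetric]) measurable
      also have "\<dots> = (\<integral>\<^sup>+r. ennreal (beta_prime_density c d q) * (ennreal (beta_prime_density a (e + b) r) * Gt r) \<partial>lborel)"
      proof (rule nn_integral_cong)
        fix r :: real
        show "ennreal ((1 + q) / q) * X ((1 + q) / q * r) = ennreal (beta_prime_density c d q) * (ennreal (beta_prime_density a (e + b) r) * Gt r)"
        proof (cases "0 < r")
          case False
          then have "(1 + q) / q * r \<le> 0" using mult_nonneg_nonpos[of "(1 + q) / q" r] k by linarith
          then show ?thesis using False by (simp add: X_def bp_nonpos)
        next
          case r: True
          define v where "v = (1 + q) / q * r"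
          have v: "0 < v" unfolding v_def using k r by (rule mult_pos_pos)
          have GG: "G ((1 + v) * q) (v / (1 + v)) = Gt r"
          proof -
            have AA: "(1 + v) * q * (1 + v / (1 + v) * t) = (1 + q) * (1 + r * (1 + t)) - 1" for t
              using arg_alg[OF q r] unfolding v_def .
            show ?thesis unfolding G_def Gt_def AA ..
          qed
          have nn: "0 \<le> (1 + v) * beta_prime_density (a + c) d ((1 + v) * q) * beta_prime_density a c v"
            using v bp_nonneg pa pc pd by auto
          have "ennreal ((1 + q) / q) * X v = ennreal ((1 + q) / q * ((1 + v) * beta_prime_density (a + c) d ((1 + v) * q) * beta_prime_density a c v)) * Gt r"
          proof -
            let ?J = "(1 + v) * beta_prime_density (a + c) d ((1 + v) * q) * beta_prime_density a c v"
            have "ennreal ((1 + q) / q * ?J) = ennreal ((1 + q) / q) * ennreal ?J"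
              by (rule ennreal_mult) (use k nn in auto)
            then show ?thesis unfolding X_def GG by (simp only: mult.assoc)
          qed
          also have "(1 + q) / q * ((1 + v) * beta_prime_density (a + c) d ((1 + v) * q) * beta_prime_density a c v) = beta_prime_density c d q * beta_prime_density a (e + b) r"
            using S5_alg[OF q r pa pc pd] unfolding v_def[symmetric] eb by (simp add: mult.assoc)
          finally show ?thesis unfolding v_def using bp_nonneg[OF pc pd, of q] bp_nonneg[OF pa, of "e + b" r] pe pb
            by (simp add: ennreal_mult mult.assoc)
        qed
      qed
      also have "\<dots> = ennreal (beta_prime_density c d q) * (\<integral>\<^sup>+r. ennreal (beta_prime_density a (e + b) r) * Gt r \<partial>lborel)"
        by (rule nn_integral_cmult) measurable
      finally show ?thesis .
    qed
    then show "(\<integral>\<^sup>+v. ennreal ((1 + v) * beta_prime_density (a + c) d ((1 + v) * q) * beta_prime_density a c v) * G ((1 + v) * q) (v / (1 + v)) \<partial>lborel)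
      = ennreal (beta_prime_density c d q) * (\<integral>\<^sup>+r. ennreal (beta_prime_density a (e + b) r) *
        (\<integral>\<^sup>+t. ennreal (beta_prime_density e b t) * h ((1 + q) * (1 + r * (1 + t)) - 1) \<partial>lborel) \<partial>lborel)"
      unfolding X_def Gt_def .
  qed
  also have "\<dots> = (\<integral>\<^sup>+q. ennreal (beta_prime_density c d q) * (\<integral>\<^sup>+x. ennreal (beta_prime_density a b x) * h ((1 + q) * (1 + x) - 1) \<partial>lborel) \<partial>lborel)"
    by (intro nn_integral_cong arg_cong2[where f="(*)"] refl L2[OF pa pb pe, of "\<lambda>y. h ((1 + q) * (1 + y) - 1)" for q, simplified]) measurable
  finally show ?thesis unfolding G_def .
qed



lemma main_eq:
  fixes a b c d :: real and h :: "real \<Rightarrow> ennreal"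
  assumes "0 < a" "0 < b" "0 < c" "0 < d" "b < c + d" and h[measurable]: "h \<in> borel_measurable borel"
  shows "(\<integral>\<^sup>+\<omega>. h ((\<lambda>(x, y). (1 + x) * (1 + y) - 1) \<omega>) \<partial>(beta_prime_measure a b \<Otimes>\<^sub>M beta_prime_measure c d))
       = (\<integral>\<^sup>+\<omega>. h ((\<lambda>(x, u, v). x * (1 + u * v)) \<omega>) \<partial>(beta_prime_measure (a + c) d \<Otimes>\<^sub>M (beta_measure a c \<Otimes>\<^sub>M beta_prime_measure (c + d - b) b)))"
proof -
  have pe: "0 < c + d - b" and eb: "(c + d - b) + b = c + d" using assms by auto
  show ?thesis
    unfolding LHS_eq[OF h] RHS_start[OF h] RHS_chain[OF assms(1-4) pe eb h]
    by (intro nn_integral_cong arg_cong2[where f="(*)"] refl) (simp add: mult.commute)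
qed

theorem proposition8:
  fixes a b c d :: real
  assumes "0 < a" "0 < b" "0 < c" "0 < d" "b < c + d"
  shows "distr (beta_prime_measure a b \<Otimes>\<^sub>M beta_prime_measure c d) borel
            (\<lambda>(x, y). (1 + x) * (1 + y) - 1)
       = distr (beta_prime_measure (a + c) d \<Otimes>\<^sub>M
                  (beta_measure a c \<Otimes>\<^sub>M beta_prime_measure (c + d - b) b)) borel
            (\<lambda>(x, u, v). x * (1 + u * v))"
proof (rule measure_eqI)
  fix A assume "A \<in> sets (distr (beta_prime_measure a b \<Otimes>\<^sub>M beta_prime_measure c d) borel (\<lambda>(x, y). (1 + x) * (1 + y) - 1))"
  then have A[measurable]: "A \<in> sets borel" by simp
  have "emeasure (distr (beta_prime_measure a b \<Otimes>\<^sub>M beta_prime_measure c d) borel (\<lambda>(x, y). (1 + x) * (1 + y) - 1)) A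
      = (\<integral>\<^sup>+x. indicator A x \<partial>distr (beta_prime_measure a b \<Otimes>\<^sub>M beta_prime_measure c d) borel (\<lambda>(x, y). (1 + x) * (1 + y) - 1))"
    by (subst nn_integral_indicator) simp_all
  also have "\<dots> = (\<integral>\<^sup>+\<omega>. indicator A ((\<lambda>(x, y). (1 + x) * (1 + y) - 1) \<omega>) \<partial>(beta_prime_measure a b \<Otimes>\<^sub>M beta_prime_measure c d))"
    by (subst nn_integral_distr) (simp_all, measurable)
  also have "\<dots> = (\<integral>\<^sup>+\<omega>. indicator A ((\<lambda>(x, u, v). x * (1 + u * v)) \<omega>) \<partial>(beta_prime_measure (a + c) d \<Otimes>\<^sub>M (beta_measure a c \<Otimes>\<^sub>M beta_prime_measure (c + d - b) b)))"
    by (rule main_eq[OF assms]) measurable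
  also have "\<dots> = (\<integral>\<^sup>+x. indicator A x \<partial>distr (beta_prime_measure (a + c) d \<Otimes>\<^sub>M (beta_measure a c \<Otimes>\<^sub>M beta_prime_measure (c + d - b) b)) borel (\<lambda>(x, u, v). x * (1 + u * v)))"
    by (subst nn_integral_distr) (simp_all, measurable)
  also have "\<dots> = emeasure (distr (beta_prime_measure (a + c) d \<Otimes>\<^sub>M (beta_measure a c \<Otimes>\<^sub>M beta_prime_measure (c + d - b) b)) borel (\<lambda>(x, u, v). x * (1 + u * v))) A"
    by (subst nn_integral_indicator) simp_all
  finally show "emeasure (distr (beta_prime_measure a b \<Otimes>\<^sub>M beta_prime_measure c d) borel (\<lambda>(x, y). (1 + x) * (1 + y) - 1)) A
      = emeasure (distr (beta_prime_measure (a + c) d \<Otimes>\<^sub>M (beta_measure a c \<Otimes>\<^sub>M beta_prime_measure (c + d - b) b)) borel (\<lambda>(x, u, v). x * (1 + u * v))) A" .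
qed simp


end
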